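(* (i) For $s=\sigma+i\tau$ with any fixed real $\sigma\notin\{1-s_i:i\ge0\}$, there is $c=c(\sigma)>0$ with $|\psi(1-s)-\psi(1)|\ge c$ for all $\tau\in\mathbb{R}$. (ii) For any compact $K\subset\mathbb{R}$ there is $c>0$ with $|\psi(1-s)-\psi(1)|\ge c$ for all $s=\sigma+i\tau$ with $\sigma\in K$ and $|\tau|\ge1$.
   Context: $\psi$ is the digamma function; $s_0=1>s_1>s_2>\cdots$ are the (real) roots of $\psi(s)=\psi(1)$, with $s_i\in(-i,-(i-1))$ for $i\ge1$. *)

theory Defs
  imports "HOL-Analysis.Analysis"
begin

text \<open>Poles (the
  non-positive integers) are excluded explicitly, since the library's Digamma
  takes a junk value there (in fact Digamma 0 = Digamma 1 in the library).\<close>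
definition digamma_roots :: "real set" where
  "digamma_roots = {x. complex_of_real x \<notin> \<int>\<^sub>\<le>\<^sub>0 \<and>
       Digamma (complex_of_real x) = Digamma (1::complex)}"

end

theory Submission imports Defs begin

lemma Im_em [simp]: "Im (euler_mascheroni :: complex) = 0"
  by (metis Im_complex_of_real of_real_euler_mascheroni)

lemma im_digamma_sums:
  fixes x y :: real assumes "y \<noteq> 0"
  shows "(\<lambda>k. y / ((x + real k)^2 + y^2)) sums Im (Digamma (Complex x y))"
proof -
  define z where "z = Complex x y"
  have z0: "z \<noteq> 0" using assms by (simp add: z_def complex_eq_iff)
  have "(\<lambda>k. inverse (of_nat (Suc k)) - inverse (z + of_nat k)) sums (Digamma z + euler_mascheroni)"
    using summable_Digamma[OF z0] by (simp add: Digamma_def summable_sums)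
  from sums_Im[OF this] have "(\<lambda>k. Im (inverse (of_nat (Suc k)) - inverse (z + of_nat k))) sums Im (Digamma z)"
    by simp
  moreover have "Im (inverse (of_nat (Suc k)) - inverse (z + of_nat k)) = y / ((x + real k)^2 + y^2)" for k
    by (simp add: z_def Im_inverse power2_eq_square complex_norm_square del: of_nat_Suc)
  ultimately show ?thesis by (simp add: z_def)
qed

lemma digamma_lower:
  fixes x y :: real assumes "y \<noteq> 0" "finite F"
  shows "\<bar>y\<bar> * (\<Sum>k\<in>F. 1 / ((x + real k)^2 + y^2)) \<le> norm (Digamma (Complex x y) - Digamma 1)"
proof -
  let ?g = "\<lambda>k::nat. 1 / ((x + real k)^2 + y^2)"
  have s: "(\<lambda>k. y / ((x + real k)^2 + y^2)) sums Im (Digamma (Complex x y))"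
    by (rule im_digamma_sums[OF assms(1)])
  have eq: "(\<lambda>k. y / ((x + real k)^2 + y^2)) = (\<lambda>k. y * ?g k)" by auto
  have sg: "summable ?g"
  proof (cases "y = 0")
    case False
    from s have "summable (\<lambda>k. y * ?g k)" unfolding eq by (simp add: sums_summable)
    then have "summable (\<lambda>k. (1/y) * (y * ?g k))" by (rule summable_mult)
    then show ?thesis using False by simp
  qed (use assms in auto)
  have "Im (Digamma (Complex x y)) = y * suminf ?g"
  proof -
    have "(\<lambda>k. y * ?g k) sums (y * suminf ?g)" by (rule sums_mult[OF summable_sums[OF sg]])
    with s[unfolded eq] show ?thesis by (rule sums_unique2)
  qed
  moreover have "(\<Sum>k\<in>F. ?g k) \<le> suminf ?g"
    by (rule sum_le_suminf[OF sg assms(2)]) (simp add: add_nonneg_nonneg)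
  ultimately have "\<bar>y\<bar> * (\<Sum>k\<in>F. ?g k) \<le> \<bar>Im (Digamma (Complex x y))\<bar>"
    by (simp add: abs_mult mult_left_mono)
  also have "\<dots> = \<bar>Im (Digamma (Complex x y) - Digamma 1)\<bar>" by simp
  also have "\<dots> \<le> norm (Digamma (Complex x y) - Digamma 1)" by (rule abs_Im_le_cmod)
  finally show ?thesis .
qed

lemma bound2:
  fixes x y B :: real assumes "\<bar>x\<bar> \<le> B" "0 \<le> B" "\<bar>y\<bar> \<ge> 1"
  shows "1 / ((B+1)^2+1) \<le> norm (Digamma (Complex x y) - Digamma 1)"
proof -
  define C where "C = (B+1)^2+1"
  define N where "N = nat \<lceil>\<bar>y\<bar>\<rceil>"
  have "(B+1)^2 \<ge> 0" by (rule zero_le_power2)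
  then have C: "C > 0" unfolding C_def by linarith
  have y0: "y \<noteq> 0" using assms by auto
  have ypos: "y^2 > 0" using y0 by simp
  have N: "real N \<ge> \<bar>y\<bar>" "real N < \<bar>y\<bar> + 1" unfolding N_def by linarith+
  have trm: "1 / (C * y^2) \<le> 1 / ((x + real k)^2 + y^2)" if "k < N" for k
  proof -
    have "real k + 1 \<le> real N" using that by linarith
    then have k: "real k < \<bar>y\<bar>" using N by linarith
    have "\<bar>x + real k\<bar> \<le> B + \<bar>y\<bar>" using assms k by linarith
    also have "\<dots> \<le> (B+1) * \<bar>y\<bar>" using assms mult_left_mono[of 1 "\<bar>y\<bar>" B] by (simp add: algebra_simps)
    finally have h: "\<bar>x + real k\<bar> \<le> (B+1) * \<bar>y\<bar>" .
    have "(B+1) * \<bar>y\<bar> \<ge> 0" using assms by simp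
    then have "\<bar>x + real k\<bar>^2 \<le> ((B+1) * \<bar>y\<bar>)^2" by (intro power_mono[OF h]) simp
    then have "(x + real k)^2 \<le> ((B+1) * \<bar>y\<bar>)^2" by (simp only: power2_abs)
    then have "(x + real k)^2 \<le> (B+1)^2 * y^2" by (simp add: power_mult_distrib)
    then have "(x + real k)^2 + y^2 \<le> C * y^2" unfolding C_def by (simp add: distrib_right)
    moreover have "(x + real k)^2 + y^2 > 0" using ypos by (simp add: add_nonneg_pos)
    ultimately show ?thesis by (simp add: frac_le)
  qed
  have "\<bar>y\<bar> * (real N * (1 / (C * y^2))) \<le> \<bar>y\<bar> * (\<Sum>k\<in>{..<N}. 1 / ((x + real k)^2 + y^2))"
  proof (rule mult_left_mono)
    have "(\<Sum>k\<in>{..<N}. 1 / (C * y^2)) \<le> (\<Sum>k\<in>{..<N}. 1 / ((x + real k)^2 + y^2))"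
      by (rule sum_mono) (simp add: trm)
    then show "real N * (1 / (C * y^2)) \<le> (\<Sum>k\<in>{..<N}. 1 / ((x + real k)^2 + y^2))" by simp
  qed simp
  also have "\<dots> \<le> norm (Digamma (Complex x y) - Digamma 1)" by (rule digamma_lower[OF y0]) simp
  finally have *: "\<bar>y\<bar> * (real N * (1 / (C * y^2))) \<le> norm (Digamma (Complex x y) - Digamma 1)" .
  have "\<bar>y\<bar> * (\<bar>y\<bar> * (1 / (C * y^2))) \<le> \<bar>y\<bar> * (real N * (1 / (C * y^2)))"
    using N C ypos by (intro mult_left_mono mult_right_mono) auto
  moreover have "\<bar>y\<bar> * (\<bar>y\<bar> * (1 / (C * y^2))) = 1 / C"
    using y0 C by (simp add: field_simps power2_eq_square abs_mult_self_eq)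
  ultimately show ?thesis using * unfolding C_def by linarith
qed

lemma bound_pole:
  fixes y :: real assumes "y \<noteq> 0" "\<bar>y\<bar> \<le> 1"
  shows "1 \<le> norm (Digamma (Complex (- real m) y) - Digamma 1)"
proof -
  have "\<bar>y\<bar> * (\<Sum>k\<in>{m}. 1 / ((- real m + real k)^2 + y^2)) \<le> norm (Digamma (Complex (- real m) y) - Digamma 1)"
    by (rule digamma_lower[OF assms(1)]) simp
  moreover have "\<bar>y\<bar> * (\<Sum>k\<in>{m}. 1 / ((- real m + real k)^2 + y^2)) = 1 / \<bar>y\<bar>"
  proof -
    have sq: "y^2 = \<bar>y\<bar> * \<bar>y\<bar>" by (simp add: power2_eq_square)
    have "\<bar>y\<bar> * (\<Sum>k\<in>{m}. 1 / ((- real m + real k)^2 + y^2)) = \<bar>y\<bar> / (\<bar>y\<bar> * \<bar>y\<bar>)"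
      by (simp only: sq) simp
    also have "\<dots> = 1 / \<bar>y\<bar>" using assms by (simp add: divide_simps del: abs_mult_self_eq)
    finally show ?thesis .
  qed
  moreover have "1 \<le> 1 / \<bar>y\<bar>" using assms by simp
  ultimately show ?thesis by linarith
qed

lemma digamma_ne_nonreal:
  fixes y :: real assumes "y \<noteq> 0"
  shows "Digamma (Complex x y) \<noteq> Digamma 1"
proof -
  have "\<bar>y\<bar> * (\<Sum>k\<in>{0}. 1 / ((x + real k)^2 + y^2)) \<le> norm (Digamma (Complex x y) - Digamma 1)"
    by (rule digamma_lower[OF assms]) simp
  moreover have "\<bar>y\<bar> * (\<Sum>k\<in>{0::nat}. 1 / ((x + real k)^2 + y^2)) > 0"
    using assms by (simp add: add_nonneg_pos)
  ultimately show ?thesis by auto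
qed

lemma Complex_notin: "y \<noteq> 0 \<Longrightarrow> Complex x y \<notin> \<int>\<^sub>\<le>\<^sub>0"
  by (auto elim!: nonpos_Ints_cases simp: complex_eq_iff)

lemma part2:
  assumes "compact K"
  shows "\<exists>c>0. \<forall>\<sigma>\<in>K. \<forall>\<tau>::real. \<bar>\<tau>\<bar> \<ge> 1 \<longrightarrow>
               norm (Digamma (1 - Complex \<sigma> \<tau>) - Digamma 1) \<ge> c"
proof -
  obtain M where M: "\<And>s. s \<in> K \<Longrightarrow> \<bar>s\<bar> \<le> M"
    using compact_imp_bounded[OF assms] by (auto simp: bounded_real)
  define B where "B = \<bar>M\<bar> + 1"
  show ?thesis
  proof (intro exI[of _ "1 / ((B+1)^2+1)"] conjI ballI allI impI)
    have "(B+1)^2 \<ge> 0" by (rule zero_le_power2)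
    then have "0 < (B+1)^2+1" by linarith
    then show "0 < 1 / ((B+1)^2+1)" by simp
    fix s t :: real assume s: "s \<in> K" and t: "1 \<le> \<bar>t\<bar>"
    have "1 - Complex s t = Complex (1 - s) (- t)" by (simp add: complex_eq_iff)
    moreover have "\<bar>1 - s\<bar> \<le> B" using M[OF s] unfolding B_def by linarith
    ultimately show "1 / ((B+1)^2+1) \<le> norm (Digamma (1 - Complex s t) - Digamma 1)"
      using bound2[of "1-s" B "-t"] t unfolding B_def by simp
  qed
qed

lemma part1:
  fixes \<sigma> :: real assumes "\<sigma> \<notin> (\<lambda>r. 1 - r) ` digamma_roots"
  shows "\<exists>c>0. \<forall>\<tau>::real. 1 - Complex \<sigma> \<tau> \<notin> \<int>\<^sub>\<le>\<^sub>0 \<longrightarrow>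
               norm (Digamma (1 - Complex \<sigma> \<tau>) - Digamma 1) \<ge> c"
proof -
  define a where "a = 1 - \<sigma>"
  have eqc: "1 - Complex \<sigma> t = Complex a (- t)" for t by (simp add: a_def complex_eq_iff)
  have a_notin: "a \<notin> digamma_roots"
  proof
    assume "a \<in> digamma_roots"
    then have "\<sigma> \<in> (\<lambda>r. 1 - r) ` digamma_roots" by (intro image_eqI[of _ _ a]) (simp_all add: a_def)
    with assms show False by simp
  qed
  obtain c1 where c1: "c1 > 0" "\<And>t. \<bar>t\<bar> \<ge> 1 \<Longrightarrow> norm (Digamma (1 - Complex \<sigma> t) - Digamma 1) \<ge> c1"
    using part2[of "{\<sigma>}"] by auto
  obtain c2 where c2: "c2 > 0" "\<And>t. \<bar>t\<bar> \<le> 1 \<Longrightarrow> 1 - Complex \<sigma> t \<notin> \<int>\<^sub>\<le>\<^sub>0 \<Longrightarrow>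
       norm (Digamma (1 - Complex \<sigma> t) - Digamma 1) \<ge> c2"
  proof (cases "complex_of_real a \<in> \<int>\<^sub>\<le>\<^sub>0")
    case True
    then obtain m where m: "complex_of_real a = - of_nat m" by (elim nonpos_Ints_cases')
    then have "complex_of_real a = complex_of_real (- real m)" by simp
    then have am: "a = - real m" by (simp only: of_real_eq_iff)
    show ?thesis
    proof (rule that[of 1])
      fix t :: real assume t: "\<bar>t\<bar> \<le> 1" "1 - Complex \<sigma> t \<notin> \<int>\<^sub>\<le>\<^sub>0"
      have "t \<noteq> 0"
      proof
        assume "t = 0"
        then have "1 - Complex \<sigma> t = complex_of_real a" by (simp add: eqc complex_eq_iff)
        with t True show False by simp
      qed
      then show "1 \<le> norm (Digamma (1 - Complex \<sigma> t) - Digamma 1)"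
        using bound_pole[of "-t" m] t by (simp add: eqc am)
    qed simp
  next
    case False
    define g where "g t = norm (Digamma (Complex a t) - Digamma 1)" for t
    have notin: "Complex a t \<notin> \<int>\<^sub>\<le>\<^sub>0" for t
    proof (cases "t = 0")
      case True
      then have "Complex a t = complex_of_real a" by (simp add: complex_eq_iff)
      with False show ?thesis by simp
    qed (rule Complex_notin)
    have pos: "g t > 0" for t
    proof (cases "t = 0")
      case True
      then have "Complex a t = complex_of_real a" by (simp add: complex_eq_iff)
      moreover have "Digamma (complex_of_real a) \<noteq> Digamma 1"
        using a_notin False unfolding digamma_roots_def by auto
      ultimately have "Digamma (Complex a t) - Digamma 1 \<noteq> 0" by (metis right_minus_eq)
      then show ?thesis unfolding g_def by (metis zero_less_norm_iff)
    next
      case False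
      then show ?thesis using digamma_ne_nonreal[OF False, of a] unfolding g_def by (metis zero_less_norm_iff right_minus_eq)
    qed
    have ceq: "Complex a t = of_real a + \<i> * of_real t" for t by (simp add: complex_eq_iff)
    have cc1: "continuous_on {-1..1} (\<lambda>t. Complex a t)"
      unfolding ceq by (intro continuous_intros)
    have cc2: "continuous_on ((\<lambda>t. Complex a t) ` {-1..1}) Digamma"
      by (rule continuous_on_Polygamma) (use notin in blast)
    have "continuous_on {-1..1} (\<lambda>t. norm ((Digamma \<circ> (\<lambda>t. Complex a t)) t - Digamma 1))"
      by (intro continuous_on_norm continuous_on_diff continuous_on_const continuous_on_compose[OF cc1 cc2])
    then have cont: "continuous_on {-1..1} g" by (simp add: g_def o_def)
    obtain t0 where t0: "t0 \<in> {-1..1}" "\<And>t. t \<in> {-1..1} \<Longrightarrow> g t0 \<le> g t"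
      using continuous_attains_inf[OF compact_Icc _ cont] by auto
    show ?thesis
    proof (rule that[of "g t0"])
      show "g t0 > 0" by (rule pos)
      fix t :: real assume t: "\<bar>t\<bar> \<le> 1"
      then have "- t \<in> {-1..1}" by auto
      then have "g t0 \<le> g (- t)" by (rule t0(2))
      then show "g t0 \<le> norm (Digamma (1 - Complex \<sigma> t) - Digamma 1)" by (simp add: g_def eqc)
    qed
  qed
  show ?thesis
  proof (intro exI[of _ "min c1 c2"] conjI allI impI)
    show "0 < min c1 c2" using c1 c2 by simp
    fix t :: real assume t: "1 - Complex \<sigma> t \<notin> \<int>\<^sub>\<le>\<^sub>0"
    show "min c1 c2 \<le> norm (Digamma (1 - Complex \<sigma> t) - Digamma 1)"
    proof (cases "\<bar>t\<bar> \<ge> 1")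
      case True then show ?thesis by (rule order_trans[OF min.cobounded1 c1(2)])
    next
      case False then have "\<bar>t\<bar> \<le> 1" by simp
      then show ?thesis by (rule order_trans[OF min.cobounded2 c2(2)[OF _ t]])
    qed
  qed
qed

theorem lemma10p3:
  shows "(\<forall>\<sigma>::real. \<sigma> \<notin> (\<lambda>r. 1 - r) ` digamma_roots \<longrightarrow>
            (\<exists>c>0. \<forall>\<tau>::real.
               1 - Complex \<sigma> \<tau> \<notin> \<int>\<^sub>\<le>\<^sub>0 \<longrightarrow>
               norm (Digamma (1 - Complex \<sigma> \<tau>) - Digamma 1) \<ge> c))
       \<and> (\<forall>K::real set. compact K \<longrightarrow>
            (\<exists>c>0. \<forall>\<sigma>\<in>K. \<forall>\<tau>::real. \<bar>\<tau>\<bar> \<ge> 1 \<longrightarrow>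
               norm (Digamma (1 - Complex \<sigma> \<tau>) - Digamma 1) \<ge> c))"
  using part1 part2 by blast

end
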